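(* Let $(E,\tau)$ be a convex space. Then $(E,\tau)$ is uniquely generated (in the sense that every $X\subseteq E$ has exactly one inclusion-minimal subset $B\subseteq X$ with $\tau(B)=\tau(X)$) if and only if $\tau(X)=\tau(EX(X))$ for every $X\subseteq E$, where $EX(X)=\{x\in X:\tau(X)\neq\tau(X-\{x\})\}$.
   Context: $E$ is a finite set and $\tau:2^E\to 2^E$. $(E,\tau)$ is a convex space if (C1) $Y\subseteq\tau(Y)$ for all $Y\subseteq E$, and (convexity) for all $Y_1\subseteq Y_2\subseteq Y_3\subseteq E$ with $\tau(Y_1)=\tau(Y_3)$ we have $\tau(Y_2)=\tau(Y_1)$. *)

theory Defs
  imports Main
begin

definition convex_space :: "'a set \<Rightarrow> ('a set \<Rightarrow> 'a set) \<Rightarrow> bool" where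
  "convex_space E \<tau> \<longleftrightarrow> finite E \<and>
     (\<forall>Y. Y \<subseteq> E \<longrightarrow> Y \<subseteq> \<tau> Y \<and> \<tau> Y \<subseteq> E) \<and>
     (\<forall>Y1 Y2 Y3. Y1 \<subseteq> Y2 \<and> Y2 \<subseteq> Y3 \<and> Y3 \<subseteq> E \<and> \<tau> Y1 = \<tau> Y3 \<longrightarrow> \<tau> Y2 = \<tau> Y1)"

definition minimal_generator :: "('a set \<Rightarrow> 'a set) \<Rightarrow> 'a set \<Rightarrow> 'a set \<Rightarrow> bool" where
  "minimal_generator \<tau> X B \<longleftrightarrow> B \<subseteq> X \<and> \<tau> B = \<tau> X \<and>
     (\<forall>B'. B' \<subset> B \<longrightarrow> \<tau> B' \<noteq> \<tau> X)"

definition uniquely_generated :: "'a set \<Rightarrow> ('a set \<Rightarrow> 'a set) \<Rightarrow> bool" where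
  "uniquely_generated E \<tau> \<longleftrightarrow> (\<forall>X. X \<subseteq> E \<longrightarrow> (\<exists>!B. minimal_generator \<tau> X B))"

definition EX_pts :: "('a set \<Rightarrow> 'a set) \<Rightarrow> 'a set \<Rightarrow> 'a set" where
  "EX_pts \<tau> X = {x \<in> X. \<tau> X \<noteq> \<tau> (X - {x})}"

end

theory Submission
  imports Defs
begin

lemma exA:
  assumes "convex_space E \<tau>" "X \<subseteq> E" "B \<subseteq> X" "\<tau> B = \<tau> X" "x \<in> EX_pts \<tau> X"
  shows "x \<in> B"
proof (rule ccontr)
  assume "x \<notin> B"
  hence "B \<subseteq> X - {x}" using assms(3) by blast
  hence "\<tau> (X - {x}) = \<tau> B" using assms(1,2,4) unfolding convex_space_def
    by (metis Diff_subset)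
  thus False using assms(4,5) unfolding EX_pts_def by auto
qed

lemma exmin:
  assumes "convex_space E \<tau>" "X \<subseteq> E"
  shows "\<exists>B. minimal_generator \<tau> X B"
proof -
  have fin: "finite X" using assms unfolding convex_space_def by (meson finite_subset)
  have "\<exists>n B. B \<subseteq> X \<and> \<tau> B = \<tau> X \<and> card B = n" by blast
  then obtain n where n: "\<exists>B. B \<subseteq> X \<and> \<tau> B = \<tau> X \<and> card B = n"
    and least: "\<And>m. m < n \<Longrightarrow> \<not> (\<exists>B. B \<subseteq> X \<and> \<tau> B = \<tau> X \<and> card B = m)"
    using ex_least_nat_le[of "\<lambda>n. \<exists>B. B \<subseteq> X \<and> \<tau> B = \<tau> X \<and> card B = n"]
    by (metis exists_least_iff)
  then obtain B where B: "B \<subseteq> X" "\<tau> B = \<tau> X" "card B = n" by blast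
  have "minimal_generator \<tau> X B"
    unfolding minimal_generator_def
  proof (intro conjI allI impI B(1) B(2))
    fix B' assume "B' \<subset> B"
    moreover have "finite B" using B(1) fin by (rule finite_subset)
    ultimately have c: "card B' < n" using B(3) psubset_card_mono by blast
    have "B' \<subseteq> X" using \<open>B' \<subset> B\<close> B(1) by blast
    thus "\<tau> B' \<noteq> \<tau> X" using least[OF c] by blast
  qed
  thus ?thesis by blast
qed

theorem mainTheorem15:
  assumes "convex_space E \<tau>"
  shows "uniquely_generated E \<tau> \<longleftrightarrow> (\<forall>X. X \<subseteq> E \<longrightarrow> \<tau> X = \<tau> (EX_pts \<tau> X))"
proof
  assume U: "uniquely_generated E \<tau>"
  show "\<forall>X. X \<subseteq> E \<longrightarrow> \<tau> X = \<tau> (EX_pts \<tau> X)"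
  proof (intro allI impI)
    fix X assume X: "X \<subseteq> E"
    obtain B where B: "minimal_generator \<tau> X B" using exmin[OF assms X] by blast
    have uniq: "\<And>C. minimal_generator \<tau> X C \<Longrightarrow> C = B" using U X B
      unfolding uniquely_generated_def by blast
    have "B \<subseteq> EX_pts \<tau> X"
    proof
      fix x assume xB: "x \<in> B"
      have xX: "x \<in> X" using xB B unfolding minimal_generator_def by blast
      show "x \<in> EX_pts \<tau> X"
      proof (rule ccontr)
        assume "x \<notin> EX_pts \<tau> X"
        hence eq: "\<tau> (X - {x}) = \<tau> X" using xX unfolding EX_pts_def by auto
        obtain C where C: "minimal_generator \<tau> (X - {x}) C"
          using exmin[OF assms, of "X - {x}"] X by blast
        have "minimal_generator \<tau> X C" using C eq unfolding minimal_generator_def by auto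
        hence "C = B" by (rule uniq)
        thus False using C xB unfolding minimal_generator_def by auto
      qed
    qed
    moreover have "EX_pts \<tau> X \<subseteq> B"
      using exA[OF assms X] B unfolding minimal_generator_def by blast
    ultimately have "B = EX_pts \<tau> X" by blast
    thus "\<tau> X = \<tau> (EX_pts \<tau> X)" using B unfolding minimal_generator_def by auto
  qed
next
  assume H: "\<forall>X. X \<subseteq> E \<longrightarrow> \<tau> X = \<tau> (EX_pts \<tau> X)"
  show "uniquely_generated E \<tau>"
    unfolding uniquely_generated_def
  proof (intro allI impI)
    fix X assume X: "X \<subseteq> E"
    have sub: "EX_pts \<tau> X \<subseteq> X" unfolding EX_pts_def by auto
    have m: "minimal_generator \<tau> X (EX_pts \<tau> X)"
      unfolding minimal_generator_def
    proof (intro conjI allI impI sub)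
      show "\<tau> (EX_pts \<tau> X) = \<tau> X" using H X by auto
      fix B' assume B': "B' \<subset> EX_pts \<tau> X"
      show "\<tau> B' \<noteq> \<tau> X"
      proof
        assume "\<tau> B' = \<tau> X"
        hence "EX_pts \<tau> X \<subseteq> B'" using exA[OF assms X, of B'] B' sub by blast
        thus False using B' by blast
      qed
    qed
    show "\<exists>!B. minimal_generator \<tau> X B"
    proof (rule ex1I[where a="EX_pts \<tau> X"])
      show "minimal_generator \<tau> X (EX_pts \<tau> X)" by (rule m)
    next
      fix C assume C: "minimal_generator \<tau> X C"
      hence "EX_pts \<tau> X \<subseteq> C" using exA[OF assms X] unfolding minimal_generator_def by blast
      moreover have "\<not> EX_pts \<tau> X \<subset> C" using C m unfolding minimal_generator_def by blast
      ultimately show "C = EX_pts \<tau> X" by blast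
    qed
  qed
qed

end
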